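(* Let $n \ge 1$ and $k > 1$ be integers. If the $n \times n$ Domineering board has outcome ${\rm 1st}$, then the $n \times kn$ board ($n$ rows, $kn$ columns) has outcome ${\rm 2nd}$ or $H$ when $k$ is even, and outcome ${\rm 1st}$ or $H$ when $k$ is odd. If the $n \times n$ board has outcome ${\rm 2nd}$, then the $n \times kn$ board has outcome ${\rm 2nd}$ or $H$ for every $k > 1$.
   Context: Domineering on an $a \times b$ board (a rectangle of $a$ rows and $b$ columns of unit cells): two players, Vera and Hepzibah, alternately place dominoes on empty cells; Vera places vertical dominoes (covering two vertically adjacent empty cells), Hepzibah places horizontal dominoes (covering two horizontally adjacent empty cells). A player who cannot move on her turn loses. The outcome class is $V$ if Vera wins with optimal play regardless of who moves first, $H$ if Hepzibah wins regardless of who moves first, ${\rm 1st}$ if the first player wins, and ${\rm 2nd}$ if the second player wins. *)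

theory Defs
  imports Main
begin

text \<open>Cells are pairs (row, column). The a x b board has rows 0..a-1 and columns 0..b-1.
  A position is the set of empty cells; the player named is the one to move.\<close>

datatype player = Vera | Hepzibah

fun other :: "player \<Rightarrow> player" where
  "other Vera = Hepzibah"
| "other Hepzibah = Vera"

definition board :: "nat \<Rightarrow> nat \<Rightarrow> (nat \<times> nat) set" where
  "board a b = {(i, j). i < a \<and> j < b}"

fun moves :: "player \<Rightarrow> (nat \<times> nat) set \<Rightarrow> (nat \<times> nat) set set" where
  "moves Vera S = {{(i, j), (Suc i, j)} | i j. (i, j) \<in> S \<and> (Suc i, j) \<in> S}"
| "moves Hepzibah S = {{(i, j), (i, Suc j)} | i j. (i, j) \<in> S \<and> (i, Suc j) \<in> S}"

text \<open>The least fixed point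
  is correct since play on a finite board terminates.\<close>
inductive win :: "player \<Rightarrow> (nat \<times> nat) set \<Rightarrow> bool"
  and lose :: "player \<Rightarrow> (nat \<times> nat) set \<Rightarrow> bool" where
  winI: "m \<in> moves p S \<Longrightarrow> lose (other p) (S - m) \<Longrightarrow> win p S"
| loseI: "(\<forall>m \<in> moves p S. win (other p) (S - m)) \<Longrightarrow> lose p S"

definition outcome_V :: "nat \<Rightarrow> nat \<Rightarrow> bool" where
  "outcome_V a b \<longleftrightarrow> win Vera (board a b) \<and> lose Hepzibah (board a b)"

definition outcome_H :: "nat \<Rightarrow> nat \<Rightarrow> bool" where
  "outcome_H a b \<longleftrightarrow> win Hepzibah (board a b) \<and> lose Vera (board a b)"

definition outcome_1st :: "nat \<Rightarrow> nat \<Rightarrow> bool" where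
  "outcome_1st a b \<longleftrightarrow> win Vera (board a b) \<and> win Hepzibah (board a b)"

definition outcome_2nd :: "nat \<Rightarrow> nat \<Rightarrow> bool" where
  "outcome_2nd a b \<longleftrightarrow> lose Vera (board a b) \<and> lose Hepzibah (board a b)"

end

theory Submission
  imports Defs
begin


fun movesr :: "nat \<Rightarrow> player \<Rightarrow> (nat \<times> nat) set \<Rightarrow> (nat \<times> nat) set set" where
  "movesr n Vera S = moves Vera S"
| "movesr n Hepzibah S = {{(i, j), (i, Suc j)} | i j. (i, j) \<in> S \<and> (i, Suc j) \<in> S \<and> Suc j mod n \<noteq> 0}"

inductive winr :: "nat \<Rightarrow> player \<Rightarrow> (nat \<times> nat) set \<Rightarrow> bool"
  and loser :: "nat \<Rightarrow> player \<Rightarrow> (nat \<times> nat) set \<Rightarrow> bool" for n where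
  winrI: "m \<in> movesr n p S \<Longrightarrow> loser n (other p) (S - m) \<Longrightarrow> winr n p S"
| loserI: "(\<forall>m \<in> movesr n p S. winr n (other p) (S - m)) \<Longrightarrow> loser n p S"

lemma other_other[simp]: "other (other p) = p" by (cases p) auto

lemma suc_div: "Suc j mod n \<noteq> 0 \<Longrightarrow> Suc j div n = j div n"
  by (simp add: div_Suc) 

lemma movesr_block: "m \<in> movesr n p S \<Longrightarrow> x \<in> m \<Longrightarrow> y \<in> m \<Longrightarrow> snd x div n = snd y div n"
  by (cases p) (auto simp: suc_div)

lemma movesr_sub: "m \<in> movesr n p S \<Longrightarrow> m \<subseteq> S \<and> m \<noteq> {}"
  by (cases p) auto

lemma movesr_restrict: "m \<in> movesr n p S \<Longrightarrow> m \<subseteq> T \<Longrightarrow> m \<in> movesr n p T"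
  by (cases p) auto

lemma r_to_real1: "winr n p S \<Longrightarrow> p = Hepzibah \<Longrightarrow> win p S"
  and r_to_real2: "loser n p S \<Longrightarrow> p = Vera \<Longrightarrow> lose p S"
proof (induct rule: winr_loser.inducts)
  case (winrI m p S)
  then show ?case by (intro winI[of m]) auto
next
  case (loserI p S)
  then show ?case by (intro loseI) auto
qed

lemma real_to_r1: "win p S \<Longrightarrow> S \<subseteq> board n n \<Longrightarrow> winr n p S"
  and real_to_r2: "lose p S \<Longrightarrow> S \<subseteq> board n n \<Longrightarrow> loser n p S"
proof (induct rule: win_lose.inducts)
  case (winI m p S)
  have "m \<in> movesr n p S"
  proof (cases p)
    case Vera then show ?thesis using winI by simp
  next
    case Hepzibah
    then obtain i j where "m = {(i, j), (i, Suc j)}" "(i, j) \<in> S" "(i, Suc j) \<in> S" using winI by auto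
    moreover then have "Suc j < n" using winI by (auto simp: board_def)
    then have "Suc j mod n \<noteq> 0" by simp
    ultimately show ?thesis unfolding Hepzibah movesr.simps by blast
  qed
  then show ?case using winI by (intro winrI[of m]) auto
next
  case (loseI p S)
  have "movesr n p S \<subseteq> moves p S" by (cases p) auto
  then show ?case using loseI by (intro loserI) auto
qed

lemma determ: "finite S \<Longrightarrow> win p S \<or> lose p S"
proof (induct S arbitrary: p rule: finite_psubset_induct)
  case (psubset S)
  show ?case
  proof (cases "\<exists>m \<in> moves p S. lose (other p) (S - m)")
    case True then show ?thesis using winI by blast
  next
    case False
    have "\<forall>m \<in> moves p S. win (other p) (S - m)"
    proof
      fix m assume m: "m \<in> moves p S"
      have "m \<subseteq> S \<and> m \<noteq> {}" using m by (cases p) auto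
      then have "S - m \<subset> S" by blast
      then show "win (other p) (S - m)" using psubset False m by blast
    qed
    then show ?thesis using loseI by blast
  qed
qed



definition sep :: "nat \<Rightarrow> (nat \<times> nat) set \<Rightarrow> (nat \<times> nat) set \<Rightarrow> bool" where
  "sep n A B \<longleftrightarrow> (\<forall>x\<in>A. \<forall>y\<in>B. snd x div n \<noteq> snd y div n)"

lemma sep_sub: "sep n A B \<Longrightarrow> A' \<subseteq> A \<Longrightarrow> B' \<subseteq> B \<Longrightarrow> sep n A' B'"
  unfolding sep_def by blast

lemma sep_diff1: "sep n A B \<Longrightarrow> sep n (A - m) B"
  unfolding sep_def by blast

lemma sep_diff2: "sep n A B \<Longrightarrow> sep n A (B - m)"
  unfolding sep_def by blast

lemma sep_disj: "sep n A B \<Longrightarrow> A \<inter> B = {}"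
  unfolding sep_def by blast

lemma movesr_split:
  assumes "m \<in> movesr n p (A \<union> B)" "sep n A B"
  shows "(m \<in> movesr n p A \<and> m \<subseteq> A) \<or> (m \<in> movesr n p B \<and> m \<subseteq> B)"
proof -
  have sub: "m \<subseteq> A \<union> B" "m \<noteq> {}" using movesr_sub[OF assms(1)] by auto
  then obtain x where x: "x \<in> m" by blast
  have blk: "\<And>y. y \<in> m \<Longrightarrow> snd x div n = snd y div n" using movesr_block[OF assms(1) x] by blast
  show ?thesis
  proof (cases "x \<in> A")
    case True
    then have "m \<subseteq> A" using sub blk assms(2) unfolding sep_def by fastforce
    then show ?thesis using movesr_restrict[OF assms(1)] by blast
  next
    case False
    then have "x \<in> B" using sub x by blast
    then have "m \<subseteq> B" using sub blk assms(2) unfolding sep_def by fastforce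
    then show ?thesis using movesr_restrict[OF assms(1)] by blast
  qed
qed

lemma sum_inner:
  assumes HA: "\<And>m B. m \<in> movesr n q A \<Longrightarrow> sep n (A - m) B \<Longrightarrow> loser n q B \<Longrightarrow> winr n (other q) ((A - m) \<union> B)"
  shows "winr n p B \<Longrightarrow> p = other q \<Longrightarrow> sep n A B \<Longrightarrow> winr n p (A \<union> B)"
    and "loser n r B \<Longrightarrow> r = q \<Longrightarrow> sep n A B \<Longrightarrow> loser n r (A \<union> B)"
proof (induct rule: winr_loser.inducts)
  case (winrI m p B)
  have mB: "m \<subseteq> B" using movesr_sub[OF winrI(1)] by blast
  have "sep n A (B - m)" using winrI(5) by (rule sep_diff2)
  moreover have "other p = q" using winrI(4) by auto
  ultimately have "loser n (other p) (A \<union> (B - m))" using winrI(3) by blast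
  moreover have "A \<union> (B - m) = (A \<union> B) - m" using mB sep_disj[OF winrI(5)] by blast
  moreover have "m \<in> movesr n p (A \<union> B)" using movesr_restrict[OF winrI(1)] mB by blast
  ultimately show ?case by (metis winr_loser.winrI)
next
  case (loserI r B)
  have "\<forall>m \<in> movesr n r B. winr n (other r) (B - m)" using loserI(1) by blast
  then have lB: "loser n q B" using loserI(2) winr_loser.loserI by blast
  show ?case
  proof (intro winr_loser.loserI ballI)
    fix m assume m: "m \<in> movesr n r (A \<union> B)"
    from movesr_split[OF m loserI(3)] show "winr n (other r) (A \<union> B - m)"
    proof
      assume mA: "m \<in> movesr n r A \<and> m \<subseteq> A"
      have "A \<union> B - m = (A - m) \<union> B" using mA sep_disj[OF loserI(3)] by blast
      moreover have "sep n (A - m) B" using loserI(3) by (rule sep_diff1)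
      moreover have "winr n (other q) ((A - m) \<union> B)" using HA[of m B] mA lB loserI(2) calculation(2) by blast
      ultimately show ?thesis using loserI(2) by simp
    next
      assume mB: "m \<in> movesr n r B \<and> m \<subseteq> B"
      have "A \<union> B - m = A \<union> (B - m)" using mB sep_disj[OF loserI(3)] by blast
      moreover have sAB: "sep n A (B - m)" using loserI(3) by (rule sep_diff2)
      moreover from loserI(1) mB have "other r = other q \<longrightarrow> sep n A (B - m) \<longrightarrow> winr n (other r) (A \<union> (B - m))" by blast
      ultimately show ?thesis using loserI(2) by simp
    qed
  qed
qed

lemma sum_outer:
  shows "winr n p A \<Longrightarrow> sep n A B \<Longrightarrow> loser n (other p) B \<Longrightarrow> winr n p (A \<union> B)"
    and "loser n q A \<Longrightarrow> sep n A B \<Longrightarrow> loser n q B \<Longrightarrow> loser n q (A \<union> B)"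
proof (induct arbitrary: B and B rule: winr_loser.inducts)
  case (winrI m p A B)
  have mA: "m \<subseteq> A" using movesr_sub[OF winrI(1)] by blast
  have "sep n (A - m) B" using winrI(4) by (rule sep_diff1)
  then have "loser n (other p) ((A - m) \<union> B)" using winrI(3) winrI(5) by blast
  moreover have "(A - m) \<union> B = (A \<union> B) - m" using mA sep_disj[OF winrI(4)] by blast
  moreover have "m \<in> movesr n p (A \<union> B)" using movesr_restrict[OF winrI(1)] mA by blast
  ultimately show ?case by (metis winr_loser.winrI)
next
  case (loserI q A B)
  have HA: "\<And>m B. m \<in> movesr n q A \<Longrightarrow> sep n (A - m) B \<Longrightarrow> loser n q B \<Longrightarrow> winr n (other q) ((A - m) \<union> B)"
    using loserI(1) other_other by metis
  show ?case
    apply (rule sum_inner(2)[OF HA])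
    using loserI(2,3) by auto
qed



definition U :: "nat \<Rightarrow> nat \<Rightarrow> (nat \<times> nat) set" where
  "U n a = {(i, j). i < n \<and> j div n = a}"

definition mir :: "nat \<Rightarrow> nat \<Rightarrow> (nat \<times> nat) set \<Rightarrow> (nat \<times> nat) set \<Rightarrow> bool" where
  "mir n a X Y \<longleftrightarrow> X \<subseteq> U n a \<and> Y \<subseteq> U n (Suc a) \<and>
     (\<forall>i j. i < n \<longrightarrow> j < n \<longrightarrow> ((i, a * n + j) \<in> X \<longleftrightarrow> (j, Suc a * n + i) \<in> Y))"

lemma dm1: "0 < (n::nat) \<Longrightarrow> j < n \<Longrightarrow> (a * n + j) div n = a"
  by simp
lemma dm2: "0 < (n::nat) \<Longrightarrow> j < n \<Longrightarrow> (a * n + j) mod n = j"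
  by simp
lemma dm3: "(j::nat) div n = a \<Longrightarrow> j = a * n + j mod n"
  by (metis div_mult_mod_eq)

lemma mirror:
  assumes n: "0 < n"
  shows "finite X \<Longrightarrow> mir n a X Y \<Longrightarrow> loser n Vera (X \<union> Y)"
proof (induct X arbitrary: Y rule: finite_psubset_induct)
  case (psubset X Y)
  have XU: "\<And>c. c \<in> X \<Longrightarrow> fst c < n \<and> snd c div n = a"
    and YU: "\<And>c. c \<in> Y \<Longrightarrow> fst c < n \<and> snd c div n = Suc a"
    and iff: "\<And>i j. i < n \<Longrightarrow> j < n \<Longrightarrow> ((i, a * n + j) \<in> X \<longleftrightarrow> (j, Suc a * n + i) \<in> Y)"
    using psubset(3) unfolding mir_def U_def by auto
  show ?case
  proof (intro loserI ballI)
    fix m assume "m \<in> movesr n Vera (X \<union> Y)"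
    then obtain i j where m: "m = {(i, j), (Suc i, j)}" "(i, j) \<in> X \<union> Y" "(Suc i, j) \<in> X \<union> Y"
      by auto
    show "winr n (other Vera) (X \<union> Y - m)"
    proof (cases "(i, j) \<in> X")
      case True
      define jj where "jj = j mod n"
      have jd: "j div n = a" "i < n" using XU[OF True] by auto
      have jeq: "j = a * n + jj" using dm3[OF jd(1)] jj_def by simp
      have jjn: "jj < n" using jj_def n by simp
      have "(Suc i, j) \<notin> Y" using YU[of "(Suc i, j)"] jd by auto
      then have sX: "(Suc i, j) \<in> X" using m by blast
      then have sin: "Suc i < n" using XU[of "(Suc i, j)"] by auto
      have y1: "(jj, Suc a * n + i) \<in> Y" using iff[OF jd(2) jjn] True jeq by simp
      have y2: "(jj, Suc a * n + Suc i) \<in> Y" using iff[OF sin jjn] sX jeq by simp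
      define m2 where "m2 = {(jj, Suc a * n + i), (jj, Suc (Suc a * n + i))}"
      have ne: "Suc a * n + i \<noteq> j" "Suc (Suc a * n + i) \<noteq> j" using jeq jjn by auto
      have md: "Suc (Suc a * n + i) mod n \<noteq> 0"
      proof -
        have "Suc (Suc a * n + i) = Suc a * n + Suc i" by simp
        then show ?thesis using dm2[OF n sin, of "Suc a"] sin by simp
      qed
      have mv: "m2 \<in> movesr n Hepzibah (X \<union> Y - m)"
        unfolding m2_def using y1 y2 ne md m(1) by auto
      have eq: "X \<union> Y - m - m2 = (X - m) \<union> (Y - m2)"
      proof -
        have "(i, j) \<notin> Y" "(Suc i, j) \<notin> Y" using YU[of "(i, j)"] YU[of "(Suc i, j)"] jd by auto
        then have "m \<inter> Y = {}" using m(1) by blast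
        moreover have "m2 \<inter> X = {}"
        proof -
          have d1: "(Suc a * n + i) div n = Suc a" by (rule dm1[OF n jd(2)])
          have d2: "(Suc (Suc a * n + i)) div n = Suc a"
            using dm1[OF n sin, of "Suc a"] by (simp only: add_Suc_right)
          have "(jj, Suc a * n + i) \<notin> X" proof
              assume "(jj, Suc a * n + i) \<in> X"
              from conjunct2[OF XU[OF this]] have "snd (jj, Suc a * n + i) div n = a" .
              then show False using d1 d2 by simp
            qed
          moreover have "(jj, Suc (Suc a * n + i)) \<notin> X" proof
              assume "(jj, Suc (Suc a * n + i)) \<in> X"
              from conjunct2[OF XU[OF this]] have "snd (jj, Suc (Suc a * n + i)) div n = a" .
              then show False using d1 d2 by simp
            qed
          ultimately have "(jj, Suc a * n + i) \<notin> X" "(jj, Suc (Suc a * n + i)) \<notin> X" by auto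
          then show ?thesis unfolding m2_def by blast
        qed
        ultimately show ?thesis by blast
      qed
      have mir': "mir n a (X - m) (Y - m2)"
        unfolding mir_def
      proof (intro conjI allI impI)
        show "X - m \<subseteq> U n a" "Y - m2 \<subseteq> U n (Suc a)" using psubset(3) unfolding mir_def by auto
        fix i' j' assume i': "i' < n" and j': "j' < n"
        have "(i', a * n + j') \<in> m \<longleftrightarrow> (i' = i \<or> i' = Suc i) \<and> j' = jj"
          using m(1) jeq by auto
        moreover have "(j', Suc a * n + i') \<in> m2 \<longleftrightarrow> (i' = i \<or> i' = Suc i) \<and> j' = jj"
          unfolding m2_def by auto
        ultimately show "(i', a * n + j') \<in> X - m \<longleftrightarrow> (j', Suc a * n + i') \<in> Y - m2"
          using iff[OF i' j'] by blast
      qed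
      have "X - m \<subset> X" using True m(1) by blast
      then have "loser n Vera ((X - m) \<union> (Y - m2))" using psubset(2) mir' by blast
      then have "loser n (other Hepzibah) (X \<union> Y - m - m2)" using eq by simp
      then show ?thesis using mv by (simp add: winrI)
    next
      case False
      then have iY: "(i, j) \<in> Y" using m by blast
      define ii where "ii = j mod n"
      have jd: "j div n = Suc a" "i < n" using YU[OF iY] by auto
      have jeq: "j = Suc a * n + ii" using dm3[OF jd(1)] ii_def by simp
      have iin: "ii < n" using ii_def n by simp
      have "(Suc i, j) \<notin> X" using XU[of "(Suc i, j)"] jd by auto
      then have sY: "(Suc i, j) \<in> Y" using m by blast
      then have sin: "Suc i < n" using YU[of "(Suc i, j)"] by auto
      have x1: "(ii, a * n + i) \<in> X" using iff[OF iin jd(2)] iY jeq by simp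
      have x2: "(ii, a * n + Suc i) \<in> X" using iff[OF iin sin] sY jeq by simp
      define m2 where "m2 = {(ii, a * n + i), (ii, Suc (a * n + i))}"
      have ne: "a * n + i \<noteq> j" "Suc (a * n + i) \<noteq> j" using jeq sin by auto
      have md: "Suc (a * n + i) mod n \<noteq> 0"
      proof -
        have "Suc (a * n + i) = a * n + Suc i" by simp
        then show ?thesis using dm2[OF n sin, of a] sin by simp
      qed
      have "(ii, a * n + i) \<in> X \<union> Y - m" "(ii, Suc (a * n + i)) \<in> X \<union> Y - m"
        using x1 x2 ne m(1) by auto
      then have mv: "m2 \<in> movesr n Hepzibah (X \<union> Y - m)"
        unfolding m2_def movesr.simps using md by blast
      have eq: "X \<union> Y - m - m2 = (X - m2) \<union> (Y - m)"
      proof -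
        have "(i, j) \<notin> X" "(Suc i, j) \<notin> X" using XU[of "(i, j)"] XU[of "(Suc i, j)"] jd by auto
        then have "m \<inter> X = {}" using m(1) by blast
        moreover have "m2 \<inter> Y = {}"
        proof -
          have d1: "(a * n + i) div n = a" by (rule dm1[OF n jd(2)])
          have d2: "(Suc (a * n + i)) div n = a"
            using dm1[OF n sin, of "a"] by (simp only: add_Suc_right)
          have "(ii, a * n + i) \<notin> Y" proof
              assume "(ii, a * n + i) \<in> Y"
              from conjunct2[OF YU[OF this]] have "snd (ii, a * n + i) div n = Suc a" .
              then show False using d1 d2 by simp
            qed
          moreover have "(ii, Suc (a * n + i)) \<notin> Y" proof
              assume "(ii, Suc (a * n + i)) \<in> Y"
              from conjunct2[OF YU[OF this]] have "snd (ii, Suc (a * n + i)) div n = Suc a" .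
              then show False using d1 d2 by simp
            qed
          ultimately have "(ii, a * n + i) \<notin> Y" "(ii, Suc (a * n + i)) \<notin> Y" by auto
          then show ?thesis unfolding m2_def by blast
        qed
        ultimately show ?thesis by blast
      qed
      have mir': "mir n a (X - m2) (Y - m)"
        unfolding mir_def
      proof (intro conjI allI impI)
        show "X - m2 \<subseteq> U n a" "Y - m \<subseteq> U n (Suc a)" using psubset(3) unfolding mir_def by auto
        fix i' j' assume i': "i' < n" and j': "j' < n"
        have "(i', a * n + j') \<in> m2 \<longleftrightarrow> i' = ii \<and> (j' = i \<or> j' = Suc i)"
          unfolding m2_def by auto
        moreover have "(j', Suc a * n + i') \<in> m \<longleftrightarrow> i' = ii \<and> (j' = i \<or> j' = Suc i)"
          using m(1) jeq by auto
        ultimately show "(i', a * n + j') \<in> X - m2 \<longleftrightarrow> (j', Suc a * n + i') \<in> Y - m"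
          using iff[OF i' j'] by blast
      qed
      have "X - m2 \<subset> X" using x1 unfolding m2_def by blast
      then have "loser n Vera ((X - m2) \<union> (Y - m))" using psubset(2) mir' by blast
      then have "loser n (other Hepzibah) (X \<union> Y - m - m2)" using eq by simp
      then show ?thesis using mv by (simp add: winrI)
    qed
  qed
qed



definition Rg :: "nat \<Rightarrow> nat \<Rightarrow> nat \<Rightarrow> (nat \<times> nat) set" where
  "Rg n a b = {(i, j). i < n \<and> a \<le> j div n \<and> j div n < b}"

lemma U_finite: "0 < n \<Longrightarrow> finite (U n a)"
proof -
  assume n: "0 < n"
  have "U n a \<subseteq> {..<n} \<times> {..<Suc a * n}"
  proof
    fix x assume "x \<in> U n a"
    then obtain i j where x: "x = (i, j)" "i < n" "j div n = a" unfolding U_def by auto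
    then have "j < Suc a * n" using div_less_iff_less_mult[OF n, of j "Suc a"] by simp
    then show "x \<in> {..<n} \<times> {..<Suc a * n}" using x by simp
  qed
  then show ?thesis by (rule finite_subset) auto
qed

lemma pair: assumes n: "0 < n" shows "loser n Vera (Rg n a (Suc (Suc a)))"
proof -
  have "Rg n a (Suc (Suc a)) = U n a \<union> U n (Suc a)"
    unfolding Rg_def U_def by auto
  moreover have "\<forall>i j. i < n \<longrightarrow> j < n \<longrightarrow> (a * n + j) div n = a \<and> (Suc a * n + i) div n = Suc a"
    using dm1[OF n] by blast
  then have "mir n a (U n a) (U n (Suc a))"
    unfolding mir_def U_def by auto
  ultimately show ?thesis using mirror[OF n U_finite[OF n]] by simp
qed

lemma sep_Rg: "sep n (Rg n a b) (Rg n b c)"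
  unfolding sep_def Rg_def by auto

lemma Rg_union: "a \<le> b \<Longrightarrow> b \<le> c \<Longrightarrow> Rg n a b \<union> Rg n b c = Rg n a c"
  unfolding Rg_def by auto

lemma lose_empty: "loser n Vera {}"
  by (intro loserI) auto

lemma pairs: assumes n: "0 < n" shows "loser n Vera (Rg n s (s + 2 * m))"
proof (induct m)
  case 0
  have "Rg n s s = {}" unfolding Rg_def by auto
  then show ?case using lose_empty by simp
next
  case (Suc m)
  have "Rg n s (s + 2 * Suc m) = Rg n s (s + 2 * m) \<union> Rg n (s + 2 * m) (Suc (Suc (s + 2 * m)))"
    using Rg_union[of s "s + 2 * m" "Suc (Suc (s + 2 * m))" n] by simp
  then show ?case using sum_outer(2)[OF Suc sep_Rg pair[OF n]] by simp
qed

lemma board_Rg: "0 < n \<Longrightarrow> board n (k * n) = Rg n 0 k"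
  unfolding board_def Rg_def using div_less_iff_less_mult by auto

lemma board_fin: "finite (board a b)"
proof -
  have "board a b \<subseteq> {..<a} \<times> {..<b}" unfolding board_def by auto
  then show ?thesis by (rule finite_subset) auto
qed

theorem mainTheorem11:
  fixes n k :: nat
  assumes "n \<ge> 1" and "k > 1"
  shows "(outcome_1st n n \<longrightarrow>
            (even k \<longrightarrow> outcome_2nd n (k * n) \<or> outcome_H n (k * n)) \<and>
            (odd k \<longrightarrow> outcome_1st n (k * n) \<or> outcome_H n (k * n)))
       \<and> (outcome_2nd n n \<longrightarrow> outcome_2nd n (k * n) \<or> outcome_H n (k * n))"
proof -
  have n: "0 < n" using assms(1) by simp
  define m where "m = k div 2"
  have bk: "board n (k * n) = Rg n 0 k" using board_Rg[OF n] .
  have b1: "board n n = Rg n 0 1" using board_Rg[OF n, of 1] by simp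
  have sq: "board n n \<subseteq> board n n" by simp
  have ev: "even k \<Longrightarrow> lose Vera (board n (k * n))"
  proof -
    assume "even k"
    then have "k = 0 + 2 * m" unfolding m_def by simp
    then have "loser n Vera (Rg n 0 k)" using pairs[OF n, of 0 m] by simp
    then show ?thesis using bk r_to_real2 by simp
  qed
  have odsplit: "odd k \<Longrightarrow> Rg n 0 k = Rg n 0 1 \<union> Rg n 1 (1 + 2 * m)"
  proof -
    assume "odd k"
    then have "k = 1 + 2 * m" unfolding m_def by presburger
    then show ?thesis using Rg_union[of 0 1 k n] by simp
  qed
  have rest: "loser n Vera (Rg n 1 (1 + 2 * m))" by (rule pairs[OF n])
  have sepr: "sep n (Rg n 0 1) (Rg n 1 (1 + 2 * m))" by (rule sep_Rg)
  have fin: "finite (board n (k * n))" by (rule board_fin)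
  have A: "outcome_1st n n \<longrightarrow>
            (even k \<longrightarrow> outcome_2nd n (k * n) \<or> outcome_H n (k * n)) \<and>
            (odd k \<longrightarrow> outcome_1st n (k * n) \<or> outcome_H n (k * n))"
  proof (intro impI conjI)
    assume "outcome_1st n n" and "even k"
    then show "outcome_2nd n (k * n) \<or> outcome_H n (k * n)"
      using ev determ[OF fin, of Hepzibah] unfolding outcome_2nd_def outcome_H_def by blast
  next
    assume o1: "outcome_1st n n" and od: "odd k"
    have "winr n Hepzibah (Rg n 0 1)"
      using o1 real_to_r1[OF _ sq] b1 unfolding outcome_1st_def by simp
    then have "winr n Hepzibah (Rg n 0 k)"
      using sum_outer(1)[OF _ sepr] rest odsplit[OF od] by simp
    then have "win Hepzibah (board n (k * n))" using bk r_to_real1 by simp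
    then show "outcome_1st n (k * n) \<or> outcome_H n (k * n)"
      using determ[OF fin, of Vera] unfolding outcome_1st_def outcome_H_def by blast
  qed
  have B: "outcome_2nd n n \<longrightarrow> outcome_2nd n (k * n) \<or> outcome_H n (k * n)"
  proof
    assume o2: "outcome_2nd n n"
    have "lose Vera (board n (k * n))"
    proof (cases "even k")
      case True then show ?thesis using ev by simp
    next
      case False
      have "loser n Vera (Rg n 0 1)"
        using o2 real_to_r2[OF _ sq] b1 unfolding outcome_2nd_def by simp
      then have "loser n Vera (Rg n 0 k)"
        using sum_outer(2)[OF _ sepr] rest odsplit[OF False] by simp
      then show ?thesis using bk r_to_real2 by simp
    qed
    then show "outcome_2nd n (k * n) \<or> outcome_H n (k * n)"
      using determ[OF fin, of Hepzibah] unfolding outcome_2nd_def outcome_H_def by blast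
  qed
  show ?thesis using A B by blast
qed


end
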